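(* Let $p$ and $b$ be distinct primes and $a$ a positive integer with $b\mid p^a-1$. Then $$g\Big(\tfrac{p^{ab}-1}{b(p^a-1)},\,p^{ab}\Big)=b.$$ If moreover $p$ and $b$ are both odd, then $$g\Big(\tfrac{2(p^{ab}-1)}{b(p^a-1)},\,p^{ab}\Big)=2b.$$
   Context: For a prime power $q$ and a positive integer $k$, the Waring number $g(k,q)$ is the smallest $s$ (if it exists) such that every element of $\mathbb{F}_q$ is a sum of $s$ $k$-th powers of elements of $\mathbb{F}_q$. *)

theory Defs
  imports "HOL-Computational_Algebra.Primes"
begin

definition sum_of_kth_powers :: "nat \<Rightarrow> nat \<Rightarrow> 'a::field \<Rightarrow> bool" where
  "sum_of_kth_powers k s x \<longleftrightarrow> (\<exists>f :: nat \<Rightarrow> 'a. (\<Sum>i<s. f i ^ k) = x)"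

text \<open>Waring number g(k,q) of the finite field 'a (with q = card UNIV):
  the least s such that every element is a sum of s k-th powers; None if no such s exists.\<close>
definition waring_number :: "'a::{field,finite} itself \<Rightarrow> nat \<Rightarrow> nat option" where
  "waring_number _ k =
     (if \<exists>s. \<forall>x::'a. sum_of_kth_powers k s x
      then Some (LEAST s. \<forall>x::'a. sum_of_kth_powers k s x) else None)"

end

theory Submission
  imports Defs "HOL-Number_Theory.Residues"
begin


definition tring :: "'a::field ring" where
  "tring = \<lparr>carrier = UNIV, monoid.mult = (\<lambda>x y. x * y), one = 1, ring.zero = 0, add = (\<lambda>x y. x + y)\<rparr>"

lemma tring_field: "field (tring :: 'a::field ring)"
proof -
  have "\<exists>y. x + y = 0" for x :: 'a
    using add.right_inverse by blast
  moreover have "x \<noteq> 0 \<Longrightarrow> \<exists>y. x * y = 1" for x :: 'a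
    by (rule exI[of _ "inverse x"]) auto
  ultimately show ?thesis
    unfolding tring_def using add.right_inverse
    by unfold_locales (auto simp:algebra_simps Units_def)
qed

lemma gen_exists:
  shows "\<exists>g::'a::{field,finite}. g \<noteq> 0 \<and> (\<forall>x. x \<noteq> 0 \<longrightarrow> (\<exists>i::nat. x = g ^ i))"
proof -
  interpret R: field "tring :: 'a ring" by (rule tring_field)
  have fin: "finite (carrier (tring :: 'a ring))" by simp
  from R.finite_field_mult_group_has_gen[OF fin] obtain a where a: "a \<in> carrier (mult_of tring)" 
    "carrier (mult_of (tring::'a ring)) = {a [^]\<^bsub>tring\<^esub> i | i::nat. i \<in> UNIV}" by auto
  have pw: "a [^]\<^bsub>(tring::'a ring)\<^esub> (i::nat) = a ^ i" for i
    by (induction i) (simp_all add: tring_def)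
  have c: "carrier (mult_of (tring::'a ring)) = UNIV - {0}" by (simp add: tring_def)
  have a0: "a \<noteq> 0" using a(1) unfolding c by simp
  have eq: "UNIV - {0} = {a ^ i | i. i \<in> (UNIV::nat set)}"
    using a(2) unfolding c pw .
  show ?thesis
  proof (intro exI[of _ a] conjI allI impI)
    fix x :: 'a assume "x \<noteq> 0" hence "x \<in> UNIV - {0}" by simp
    thus "\<exists>i. x = a ^ i" unfolding eq by blast
  qed (rule a0)
qed

lemma nonzero_pow_card:
  fixes x :: "'a::{field,finite}"
  assumes "x \<noteq> 0"
  shows "x ^ (card (UNIV::'a set) - 1) = 1"
proof -
  have "(\<Prod>y\<in>UNIV-{0}. x * y) = (\<Prod>y\<in>UNIV-{0::'a}. y)"
    by (rule prod.reindex_bij_witness[of _ "\<lambda>y. y / x" "\<lambda>y. x * y"]) (use assms in auto)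
  moreover have "(\<Prod>y\<in>UNIV-{0}. x * y) = x ^ card (UNIV-{0::'a}) * (\<Prod>y\<in>UNIV-{0::'a}. y)"
    by (simp add: prod.distrib)
  moreover have "(\<Prod>y\<in>UNIV-{0::'a}. y) \<noteq> 0" by simp
  moreover have "card (UNIV-{0::'a}) = card (UNIV::'a set) - 1" by (simp add: card_Diff_singleton)
  ultimately show ?thesis by (metis mult_cancel_right2)
qed

lemma gen_cong:
  fixes g :: "'a::{field,finite}"
  assumes g0: "g \<noteq> 0" and gen: "\<forall>x. x \<noteq> 0 \<longrightarrow> (\<exists>i::nat. x = g ^ i)"
    and N: "N = card (UNIV::'a set) - 1"
  shows "g ^ i = g ^ j \<longleftrightarrow> [i = j] (mod N)"
proof -
  have gN: "g ^ N = 1" using nonzero_pow_card[OF g0] N by simp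
  have cardge: "card (UNIV::'a set) \<ge> 2"
  proof -
    have "card {0::'a, 1} \<le> card (UNIV::'a set)" by (rule card_mono) auto
    thus ?thesis by simp
  qed
  hence Npos: "N > 0" using N by simp
  have red: "g ^ n = g ^ (n mod N)" for n
  proof -
    have "g ^ n = g ^ (N * (n div N) + n mod N)" by simp
    also have "\<dots> = (g ^ N) ^ (n div N) * g ^ (n mod N)" by (simp only: power_add power_mult)
    finally show ?thesis using gN by simp
  qed
  have img: "(\<lambda>i. g ^ i) ` {..<N} = UNIV - {0}"
  proof
    show "(\<lambda>i. g ^ i) ` {..<N} \<subseteq> UNIV - {0}" using g0 by auto
    show "UNIV - {0} \<subseteq> (\<lambda>i. g ^ i) ` {..<N}"
    proof
      fix x assume "x \<in> (UNIV::'a set) - {0}"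
      then obtain i where "x = g ^ i" using gen by auto
      hence "x = g ^ (i mod N)" using red by simp
      moreover have "i mod N < N" using Npos by simp
      ultimately show "x \<in> (\<lambda>i. g ^ i) ` {..<N}" by auto
    qed
  qed
  have "card ((\<lambda>i. g ^ i) ` {..<N}) = card {..<N}"
    unfolding img using N by (simp add: card_Diff_singleton)
  hence inj: "inj_on (\<lambda>i. g ^ i) {..<N}" by (rule eq_card_imp_inj_on[rotated]) simp
  show ?thesis
  proof
    assume "g ^ i = g ^ j"
    hence "g ^ (i mod N) = g ^ (j mod N)" using red by metis
    hence "i mod N = j mod N" using inj Npos by (auto dest: inj_onD)
    thus "[i = j] (mod N)" by (simp add: cong_def)
  next
    assume "[i = j] (mod N)"
    thus "g ^ i = g ^ j" using red by (metis cong_def)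
  qed
qed

lemma char_eq:
  assumes "prime p" "card (UNIV::'a::{field,finite} set) = p ^ n"
  shows "CHAR('a) = p"
proof -
  have "CHAR('a) dvd p ^ n" using CHAR_dvd_CARD[where 'a='a] assms by simp
  moreover have "CHAR('a) > 0" by (simp add: finite_imp_CHAR_pos)
  hence pc: "prime CHAR('a)" by (rule prime_CHAR_semidom)
  ultimately have "CHAR('a) dvd p" using prime_dvd_power by blast
  thus ?thesis using pc assms(1) by (simp add: primes_dvd_imp_eq)
qed

lemma geom_nat: "(Q::nat) \<ge> 1 \<Longrightarrow> 1 + (Q - 1) * (\<Sum>i<n. Q ^ i) = Q ^ n"
proof (induction n)
  case 0 then show ?case by simp
next
  case (Suc n)
  have "1 + (Q - 1) * (\<Sum>i<Suc n. Q ^ i) = 1 + (Q - 1) * (\<Sum>i<n. Q ^ i) + (Q - 1) * Q ^ n"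
    by (simp add: algebra_simps)
  also have "\<dots> = Q ^ n + (Q - 1) * Q ^ n" using Suc by simp
  also have "\<dots> = Q ^ Suc n" using Suc.prems by (cases Q) auto
  finally show ?case .
qed

lemma nt_fact:
  fixes p a b :: nat
  assumes "prime p" "prime b" "a > 0" "b dvd p ^ a - 1"
  shows "b * (p ^ a - 1) * ((p ^ (a * b) - 1) div (b * (p ^ a - 1))) = p ^ (a * b) - 1"
proof -
  define Q where "Q = p ^ a"
  have Q1: "Q \<ge> 1" using assms unfolding Q_def by (simp add: prime_gt_0_nat Suc_le_eq)
  define S where "S = (\<Sum>i<b. Q ^ i)"
  have geo: "1 + (Q - 1) * S = Q ^ b" using geom_nat[OF Q1] S_def by simp
  have "[Q = 1] (mod b)" using assms(4) Q1 unfolding Q_def by (simp add: cong_altdef_nat)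
  hence "[Q ^ i = 1] (mod b)" for i by (metis cong_pow power_one)
  hence "[S = (\<Sum>i<b. 1)] (mod b)" unfolding S_def by (intro cong_sum) auto
  hence "[S = 0] (mod b)" by (simp add: cong_def)
  then obtain k where Sk: "S = b * k" by (auto simp: cong_0_iff)
  have "p ^ (a * b) - 1 = b * (Q - 1) * k"
    using geo Sk unfolding Q_def by (simp add: power_mult algebra_simps)
  moreover have "b * (Q - 1) > 0 \<or> k = 0 \<or> True" by simp
  ultimately show ?thesis unfolding Q_def
    by (metis div_mult_self1_is_m mult.commute mult_0_right mult_is_0 nonzero_mult_div_cancel_left)
qed



lemma sumQ:
  fixes f :: "'b \<Rightarrow> 'a::field"
  assumes add: "\<And>x y::'a. (x + y) ^ Q = x ^ Q + y ^ Q" and Q: "Q > 0"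
  shows "(\<Sum>i\<in>A. f i) ^ Q = (\<Sum>i\<in>A. f i ^ Q)"
proof (induction A rule: infinite_finite_induct)
  case (infinite A) then show ?case using Q by simp
next
  case empty then show ?case using Q by simp
next
  case (insert x F) then show ?case by (simp add: add)
qed

lemma subQ:
  fixes x y :: "'a::field"
  assumes add: "\<And>x y::'a. (x + y) ^ Q = x ^ Q + y ^ Q"
  shows "(x - y) ^ Q = x ^ Q - y ^ Q"
  using add[of "x - y" y] by (simp add: algebra_simps)

lemma indep:
  fixes t z :: "'a::field"
  assumes add: "\<And>x y::'a. (x + y) ^ Q = x ^ Q + y ^ Q" and Q: "Q > 0"
    and t: "t \<noteq> 0" and tz: "t ^ Q = t * z" and zK: "z ^ Q = z"
    and zinj: "\<And>i j. i < b \<Longrightarrow> j < b \<Longrightarrow> z ^ i = z ^ j \<Longrightarrow> i = j"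
  shows "\<forall>c. card {i\<in>{..<b}. c i \<noteq> 0} = n \<longrightarrow> (\<forall>i<b. c i ^ Q = c i)
           \<longrightarrow> (\<Sum>i<b. c i * t ^ i) = 0 \<longrightarrow> (\<forall>i<b. c i = 0)"
proof (induction n rule: less_induct)
  case (less n)
  show ?case
  proof (rule allI, intro impI)
    fix c assume cn: "card {i\<in>{..<b}. c i \<noteq> 0} = n" and cK: "\<forall>i<b. c i ^ Q = c i"
      and s0: "(\<Sum>i<b. c i * t ^ i) = 0"
    show "\<forall>i<b. c i = 0"
    proof (rule ccontr)
      assume "\<not> (\<forall>i<b. c i = 0)"
      then obtain i0 where i0: "i0 < b" "c i0 \<noteq> 0" by auto
      define c' where "c' i = c i * (z ^ i - z ^ i0)" for i
      have zpow: "(z ^ i) ^ Q = z ^ i" for i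
        by (metis power_mult mult.commute zK)
      have c'K: "\<forall>i<b. c' i ^ Q = c' i"
        using cK by (simp add: c'_def power_mult_distrib subQ[OF add] zpow)
      have "(\<Sum>i<b. c i * t ^ i) ^ Q = (\<Sum>i<b. (c i * t ^ i) ^ Q)"
        by (rule sumQ[OF add Q])
      also have "\<dots> = (\<Sum>i<b. c i * z ^ i * t ^ i)"
      proof (rule sum.cong[OF refl])
        fix i assume "i \<in> {..<b}"
        hence "c i ^ Q = c i" using cK by simp
        moreover have "(t ^ i) ^ Q = (t * z) ^ i" by (metis power_mult mult.commute tz)
        ultimately show "(c i * t ^ i) ^ Q = c i * z ^ i * t ^ i"
          by (simp add: power_mult_distrib algebra_simps)
      qed
      finally have s1: "(\<Sum>i<b. c i * z ^ i * t ^ i) = 0" using s0 Q by (simp add: power_0_left)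
      have "(\<Sum>i<b. c' i * t ^ i) = (\<Sum>i<b. c i * z ^ i * t ^ i) - z ^ i0 * (\<Sum>i<b. c i * t ^ i)"
        by (simp add: c'_def sum_distrib_left sum_subtractf[symmetric] algebra_simps)
      hence s2: "(\<Sum>i<b. c' i * t ^ i) = 0" using s0 s1 by simp
      have supp: "{i\<in>{..<b}. c' i \<noteq> 0} = {i\<in>{..<b}. c i \<noteq> 0} - {i0}"
        using zinj i0(1) by (auto simp: c'_def)
      have "card {i\<in>{..<b}. c' i \<noteq> 0} < n"
        unfolding supp cn[symmetric] using i0 by (intro card_Diff1_less) auto
      with less.IH c'K s2 have z': "\<forall>i<b. c' i = 0" by blast
      have other: "c i = 0" if "i < b" "i \<noteq> i0" for i
      proof -
        have "z ^ i \<noteq> z ^ i0" using zinj that i0(1) by blast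
        thus ?thesis using z' that unfolding c'_def by auto
      qed
      have h1: "(\<Sum>i<b. c i * t ^ i) = c i0 * t ^ i0 + (\<Sum>i\<in>{..<b}-{i0}. c i * t ^ i)"
        using i0(1) by (simp add: sum.remove)
      have h2: "(\<Sum>i\<in>{..<b}-{i0}. c i * t ^ i) = 0"
        using other by (intro sum.neutral) auto
      have "c i0 * t ^ i0 = 0" using s0 h1 h2 by simp
      thus False using i0 t by simp
    qed
  qed
qed

lemma uniq:
  fixes t z :: "'a::field"
  assumes add: "\<And>x y::'a. (x + y) ^ Q = x ^ Q + y ^ Q" and Q: "Q > 0"
    and t: "t \<noteq> 0" and tz: "t ^ Q = t * z" and zK: "z ^ Q = z"
    and zinj: "\<And>i j. i < b \<Longrightarrow> j < b \<Longrightarrow> z ^ i = z ^ j \<Longrightarrow> i = j"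
    and cK: "\<forall>i<b. c i ^ Q = c i" and dK: "\<forall>i<b. d i ^ Q = d i"
    and eq: "(\<Sum>i<b. c i * t ^ i) = (\<Sum>i<b. d i * t ^ i)"
  shows "\<forall>i<b. c i = d i"
proof -
  have "\<forall>i<b. (c i - d i) ^ Q = c i - d i" using cK dK by (simp add: subQ[OF add])
  moreover have "(\<Sum>i<b. (c i - d i) * t ^ i) = 0"
    using eq by (simp add: algebra_simps sum_subtractf)
  ultimately have "\<forall>i<b. c i - d i = 0"
    using indep[OF add Q t tz zK zinj, where n="card {i\<in>{..<b}. c i - d i \<noteq> 0}", rule_format, where c="\<lambda>i. c i - d i"]
    by blast
  thus ?thesis by simp
qed

lemma span:
  fixes t z :: "'a::{field,finite}"
  assumes add: "\<And>x y::'a. (x + y) ^ Q = x ^ Q + y ^ Q" and Q: "Q > 0"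
    and t: "t \<noteq> 0" and tz: "t ^ Q = t * z" and zK: "z ^ Q = z"
    and zinj: "\<And>i j. i < b \<Longrightarrow> j < b \<Longrightarrow> z ^ i = z ^ j \<Longrightarrow> i = j"
    and b: "b > 0"
    and Kcard: "Q \<le> card {x::'a. x ^ Q = x}" and Fcard: "card (UNIV::'a set) = Q ^ b"
  shows "\<forall>x. \<exists>c. (\<forall>i<b. c i ^ Q = c i) \<and> x = (\<Sum>i<b. c i * t ^ i)"
    and "card {x::'a. x ^ Q = x} = Q"
proof -
  define K where "K = {x::'a. x ^ Q = x}"
  define D where "D = PiE {..<b} (\<lambda>_. K)"
  define \<phi> where "\<phi> c = (\<Sum>i<b. c i * t ^ i)" for c
  have inj: "inj_on \<phi> D"
  proof
    fix c d assume c: "c \<in> D" and d: "d \<in> D" and e: "\<phi> c = \<phi> d"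
    have "\<forall>i<b. c i = d i"
      by (rule uniq[OF add Q t tz zK zinj]) (use c d e in \<open>auto simp: D_def K_def \<phi>_def\<close>)
    thus "c = d" using c d unfolding D_def
      by (intro ext) (metis PiE_arb lessThan_iff)
  qed
  have cD: "card D = card K ^ b" unfolding D_def by (simp add: card_PiE)
  have "card (\<phi> ` D) = card K ^ b" using card_image[OF inj] cD by simp
  moreover have "card (\<phi> ` D) \<le> Q ^ b" using Fcard by (metis card_mono finite subset_UNIV)
  ultimately have le: "card K ^ b \<le> Q ^ b" by simp
  have ge: "Q ^ b \<le> card K ^ b" using Kcard unfolding K_def by (simp add: power_mono)
  have "card (\<phi> ` D) = card (UNIV::'a set)" using le ge Fcard \<open>card (\<phi> ` D) = card K ^ b\<close> by simp
  hence surj: "\<phi> ` D = UNIV" by (simp add: card_eq_UNIV_imp_eq_UNIV)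
  show "\<forall>x. \<exists>c. (\<forall>i<b. c i ^ Q = c i) \<and> x = (\<Sum>i<b. c i * t ^ i)"
  proof
    fix x :: 'a
    have "x \<in> \<phi> ` D" using surj by simp
    then obtain c where "c \<in> D" "x = \<phi> c" by auto
    thus "\<exists>c. (\<forall>i<b. c i ^ Q = c i) \<and> x = (\<Sum>i<b. c i * t ^ i)"
      by (intro exI[of _ c]) (auto simp: D_def K_def \<phi>_def)
  qed
  have "card K = Q"
  proof -
    obtain b' where "b = Suc b'" using b by (cases b) auto
    hence "card K \<le> Q" using le power_le_imp_le_base by blast
    thus ?thesis using Kcard K_def by simp
  qed
  thus "card {x::'a. x ^ Q = x} = Q" by (simp add: K_def)
qed

lemma regroup:
  fixes d :: "nat \<Rightarrow> 'a::field"
  assumes "\<forall>j<s. \<iota> j < b"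
  shows "(\<Sum>j<s. d j * t ^ \<iota> j) = (\<Sum>i<b. (\<Sum>j\<in>{j\<in>{..<s}. \<iota> j = i}. d j) * t ^ i)"
proof -
  have "(\<Sum>i<b. (\<Sum>j\<in>{j\<in>{..<s}. \<iota> j = i}. d j) * t ^ i)
      = (\<Sum>i<b. \<Sum>j<s. if \<iota> j = i then d j * t ^ i else 0)"
  proof (rule sum.cong[OF refl])
    fix i
    have "(\<Sum>j\<in>{j\<in>{..<s}. \<iota> j = i}. d j) * t ^ i = (\<Sum>j\<in>{j\<in>{..<s}. \<iota> j = i}. d j * t ^ i)"
      by (rule sum_distrib_right)
    also have "\<dots> = (\<Sum>j<s. if \<iota> j = i then d j * t ^ i else 0)"
      by (rule sum.inter_filter) simp
    finally show "(\<Sum>j\<in>{j\<in>{..<s}. \<iota> j = i}. d j) * t ^ i = (\<Sum>j<s. if \<iota> j = i then d j * t ^ i else 0)" .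
  qed
  also have "\<dots> = (\<Sum>j<s. \<Sum>i<b. if \<iota> j = i then d j * t ^ i else 0)"
    by (rule sum.swap)
  also have "\<dots> = (\<Sum>j<s. d j * t ^ \<iota> j)"
  proof (rule sum.cong[OF refl])
    fix j assume "j \<in> {..<s}"
    hence "\<iota> j \<in> {..<b}" using assms by simp
    thus "(\<Sum>i<b. if \<iota> j = i then d j * t ^ i else 0) = d j * t ^ \<iota> j"
      by (simp add: sum.delta)
  qed
  finally show ?thesis by simp
qed

lemma squares:
  fixes K :: "'a::field set"
  assumes fin: "finite K" and mul: "\<And>x y. x \<in> K \<Longrightarrow> y \<in> K \<Longrightarrow> x * y \<in> K"
    and sub: "\<And>x y. x \<in> K \<Longrightarrow> y \<in> K \<Longrightarrow> x - y \<in> K" and zero: "0 \<in> K" and c: "c \<in> K"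
  shows "\<exists>x y. x \<in> K \<and> y \<in> K \<and> c = x ^ 2 + y ^ 2"
proof -
  define S where "S = (\<lambda>x. x ^ 2) ` K"
  have SK: "S \<subseteq> K" unfolding S_def using mul by (auto simp: power2_eq_square)
  have finS: "finite S" using fin S_def by simp
  have cover: "K - {0} \<subseteq> (\<Union>s\<in>S-{0}. {x\<in>K. x ^ 2 = s})" unfolding S_def by auto
  have fib: "card {x\<in>K. x ^ 2 = s} \<le> 2" for s
  proof (cases "{x\<in>K. x ^ 2 = s} = {}")
    case True then show ?thesis by (metis card.empty zero_le)
  next
    case False
    then obtain x0 where x0: "x0 \<in> K" "x0 ^ 2 = s" by auto
    have "{x\<in>K. x ^ 2 = s} \<subseteq> {x0, -x0}"
    proof
      fix x assume "x \<in> {x\<in>K. x ^ 2 = s}"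
      hence "x ^ 2 = x0 ^ 2" using x0 by simp
      hence "(x - x0) * (x + x0) = 0" by (simp add: algebra_simps power2_eq_square)
      thus "x \<in> {x0, -x0}" by (auto simp: add_eq_0_iff2)
    qed
    hence "card {x\<in>K. x ^ 2 = s} \<le> card {x0, -x0}" by (intro card_mono) auto
    also have "\<dots> \<le> 2" by (simp add: card_insert_if)
    finally show ?thesis .
  qed
  have "card (K - {0}) \<le> card (\<Union>s\<in>S-{0}. {x\<in>K. x ^ 2 = s})"
    by (intro card_mono cover) (use finS fin in auto)
  also have "\<dots> \<le> (\<Sum>s\<in>S-{0}. card {x\<in>K. x ^ 2 = s})" by (rule card_UN_le) (use finS in auto)
  also have "\<dots> \<le> (\<Sum>s\<in>S-{0}. 2)" by (intro sum_mono fib)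
  also have "\<dots> = 2 * card (S - {0})" by simp
  finally have A: "card K - 1 \<le> 2 * (card S - 1)"
    using zero by (simp add: card_Diff_singleton S_def image_iff)
  have "0 \<in> S" unfolding S_def using zero by (auto intro: image_eqI[of _ _ 0])
  hence Spos: "card S \<ge> 1" using finS by (metis One_nat_def Suc_leI card_gt_0_iff empty_iff)
  have big: "2 * card S > card K" using A Spos by linarith
  define B where "B = (\<lambda>s. c - s) ` S"
  have cardB: "card B = card S" unfolding B_def by (intro card_image inj_onI) auto
  have BK: "B \<subseteq> K" unfolding B_def using SK sub c by auto
  have "S \<inter> B \<noteq> {}"
  proof
    assume e: "S \<inter> B = {}"
    have "card (S \<union> B) = card S + card B" using e finS B_def by (simp add: card_Un_disjoint)
    moreover have "card (S \<union> B) \<le> card K" using SK BK fin by (intro card_mono) auto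
    ultimately show False using big cardB by simp
  qed
  then obtain s where "s \<in> S" "s \<in> B" by auto
  then obtain x y where "x \<in> K" "s = x ^ 2" "y \<in> K" "s = c - y ^ 2" unfolding S_def B_def by auto
  moreover have "c = x ^ 2 + y ^ 2" using \<open>s = x ^ 2\<close> \<open>s = c - y ^ 2\<close> by (metis diff_add_cancel)
  ultimately show ?thesis by blast
qed

lemma nonsquare:
  fixes K :: "'a::field set"
  assumes fin: "finite K" and mul: "\<And>x y. x \<in> K \<Longrightarrow> y \<in> K \<Longrightarrow> x * y \<in> K"
    and one: "1 \<in> K" and mone: "-1 \<in> K" and ne: "(1::'a) \<noteq> -1"
  shows "\<exists>n\<in>K. \<forall>x\<in>K. n \<noteq> x ^ 2"
proof (rule ccontr)
  assume "\<not> ?thesis"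
  hence "K \<subseteq> (\<lambda>x. x ^ 2) ` K" by auto
  moreover have "(\<lambda>x. x ^ 2) ` K \<subseteq> K" using mul by (auto simp: power2_eq_square)
  ultimately have "(\<lambda>x. x ^ 2) ` K = K" by blast
  hence "inj_on (\<lambda>x. x ^ 2) K" using fin by (simp add: eq_card_imp_inj_on)
  hence "(1::'a) = -1" using one mone by (auto dest: inj_onD[of _ K 1 "-1"])
  thus False using ne by simp
qed



lemma fstruct:
  fixes p a b r :: nat
  assumes p: "prime p" and bp: "prime b" and a: "a > 0" and bdvd: "b dvd p ^ a - 1"
    and card: "card (UNIV::'a::{field,finite} set) = p ^ (a * b)" and r: "r > 0" and br: "\<not> b dvd r"
  shows "\<exists>t::'a. (\<forall>y::'a. \<exists>c i. c ^ (p^a) = c \<and> i < b \<and> y ^ (r * ((p^(a*b) - 1) div (b*(p^a-1)))) = c ^ r * t ^ i)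
     \<and> (\<forall>c i. c ^ (p^a) = c \<longrightarrow> i < b \<longrightarrow> (\<exists>y::'a. c ^ r * t ^ i = y ^ (r * ((p^(a*b) - 1) div (b*(p^a-1))))))
     \<and> (\<forall>c d. (\<forall>i<b. c i ^ (p^a) = c i) \<longrightarrow> (\<forall>i<b. d i ^ (p^a) = d i) \<longrightarrow>
           (\<Sum>i<b. c i * t ^ i) = (\<Sum>i<b. d i * t ^ i) \<longrightarrow> (\<forall>i<b. c i = d i))
     \<and> (\<forall>x. \<exists>c. (\<forall>i<b. c i ^ (p^a) = c i) \<and> x = (\<Sum>i<b. c i * t ^ i))
     \<and> card {x::'a. x ^ (p^a) = x} = p ^ a"
proof -
  define Q where "Q = p ^ a"
  define m where "m = Q - 1"
  define k where "k = (p^(a*b) - 1) div (b*(p^a-1))"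
  define N where "N = card (UNIV::'a set) - 1"
  have p2: "p \<ge> 2" using p by (simp add: prime_ge_2_nat)
  have b2: "b \<ge> 2" using bp by (simp add: prime_ge_2_nat)
  have "p \<le> Q" unfolding Q_def using p2 a by (simp add: self_le_power)
  hence Q2: "Q \<ge> 2" using p2 by simp
  hence m1: "m \<ge> 1" unfolding m_def by simp
  have QM: "Q = Suc m" unfolding m_def using Q2 by simp
  have Nbmk: "N = b * m * k"
    using nt_fact[OF p bp a bdvd] card unfolding N_def m_def k_def Q_def by simp
  have Fcard: "card (UNIV::'a set) = Q ^ b" using card by (simp add: Q_def power_mult)
  have "Q ^ b \<ge> Q ^ 1" using b2 Q2 by (intro power_increasing) auto
  hence Npos: "N > 0" using Fcard Q2 unfolding N_def by simp
  hence kpos: "k > 0" using Nbmk by simp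
  have bk0: "b * k > 0" using b2 kpos by simp
  have chareq: "CHAR('a) = p" by (rule char_eq[OF p card])
  have add: "(x + y) ^ Q = x ^ Q + y ^ Q" for x y :: 'a
    by (rule freshmans_dream') (use chareq p in \<open>simp_all add: Q_def\<close>)
  have Qpos: "Q > 0" using Q2 by simp
  obtain g :: 'a where g0: "g \<noteq> 0" and gen: "\<forall>x. x \<noteq> 0 \<longrightarrow> (\<exists>i::nat. x = g ^ i)"
    using gen_exists by blast
  have gc: "g ^ i = g ^ j \<longleftrightarrow> [i = j] (mod N)" for i j
    by (rule gen_cong[OF g0 gen N_def])
  have g1: "g ^ i = 1 \<longleftrightarrow> N dvd i" for i
    using gc[of i 0] by (simp add: cong_0_iff)
  have Kmem: "(g ^ j) ^ Q = g ^ j \<longleftrightarrow> b * k dvd j" for j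
  proof -
    have "(g ^ j) ^ Q = g ^ (j * Q)" by (simp add: power_mult)
    hence "(g ^ j) ^ Q = g ^ j \<longleftrightarrow> [j * Q = j] (mod N)" using gc by simp
    also have "\<dots> \<longleftrightarrow> N dvd (j * Q - j)" using Q2 by (intro cong_altdef_nat) simp
    also have "j * Q - j = j * m" unfolding QM by simp
    also have "N dvd j * m \<longleftrightarrow> b * k dvd j"
      unfolding Nbmk using m1 by (simp add: mult.commute[of _ m] mult.assoc[symmetric] dvd_mult_cancel2
          mult.left_commute[of m])
    finally show ?thesis .
  qed
  have Knz: "\<exists>u. x = g ^ (b * k * u)" if x0: "x \<noteq> 0" and xQ: "x ^ Q = x" for x
  proof -
    obtain j where j: "x = g ^ j" using gen x0 by blast
    hence "b * k dvd j" using Kmem xQ by simp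
    then obtain u where "j = b * k * u" by (auto elim: dvdE)
    thus ?thesis using j by blast
  qed
  define K where "K = {x::'a. x ^ Q = x}"
  have Kcard: "Q \<le> card K"
  proof -
    define f where "f u = g ^ (b * k * u)" for u
    have inj: "inj_on f {..<m}"
    proof
      fix u v assume u: "u \<in> {..<m}" and v: "v \<in> {..<m}" and e: "f u = f v"
      have "[b * k * u = b * k * v] (mod N)" using e gc unfolding f_def by simp
      moreover have "b * k * u < N" "b * k * v < N" using u v bk0 unfolding Nbmk by auto
      ultimately have "b * k * u = b * k * v" by (rule cong_less_modulus_unique_nat)
      thus "u = v" using bk0 by simp
    qed
    have "0 \<notin> f ` {..<m}" using g0 unfolding f_def by auto
    hence "card (insert 0 (f ` {..<m})) = Suc m" using card_image[OF inj] by simp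
    moreover have "insert 0 (f ` {..<m}) \<subseteq> K"
    proof
      fix x assume "x \<in> insert 0 (f ` {..<m})"
      then consider "x = 0" | u where "x = f u" by blast
      then show "x \<in> K"
      proof cases
        case 1 then show ?thesis using Qpos unfolding K_def by (simp add: power_0_left)
      next
        case 2
        have "b * k dvd b * k * u" by simp
        hence "(g ^ (b * k * u)) ^ Q = g ^ (b * k * u)" using Kmem by blast
        then show ?thesis using 2 unfolding K_def f_def by simp
      qed
    qed
    ultimately have "Suc m \<le> card K" by (metis card_mono finite)
    thus ?thesis using QM by simp
  qed
  define t where "t = g ^ (r * k)"
  define z where "z = g ^ (r * k * m)"
  have t0: "t \<noteq> 0" using g0 unfolding t_def by simp
  have tz: "t ^ Q = t * z"
  proof -
    have "r * k * Q = r * k + r * k * m" unfolding QM by simp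
    thus ?thesis unfolding t_def z_def by (simp add: power_mult[symmetric] power_add[symmetric])
  qed
  have bm: "b dvd m" using bdvd unfolding m_def Q_def .
  then obtain m' where m': "m = b * m'" by (auto elim: dvdE)
  have zK: "z ^ Q = z"
  proof -
    have "b * k dvd r * k * m" unfolding m' by (simp add: mult_ac)
    thus ?thesis unfolding z_def using Kmem by simp
  qed
  have zinj0: "i = j" if ij: "i \<le> j" "j < b" "z ^ i = z ^ j" for i j
  proof -
    have z0: "z \<noteq> 0" using g0 unfolding z_def by simp
    have "z ^ j = z ^ i * z ^ (j - i)" using ij(1) by (metis le_add_diff_inverse power_add)
    hence "z ^ (j - i) = 1" using ij(3) z0 by simp
    hence "N dvd r * k * m * (j - i)" unfolding z_def using g1 by (simp add: power_mult[symmetric])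
    hence "b * (k * m) dvd (r * (j - i)) * (k * m)" unfolding Nbmk by (simp add: mult_ac)
    hence "b dvd r * (j - i)" using kpos m1 by (simp add: dvd_mult_cancel2)
    hence "b dvd j - i" using bp br by (simp add: prime_dvd_mult_iff)
    moreover have "j - i < b" using ij by simp
    ultimately have "j - i = 0" by (metis dvd_imp_le linorder_not_le neq0_conv)
    thus ?thesis using ij by simp
  qed
  have zinj: "i = j" if "i < b" "j < b" "z ^ i = z ^ j" for i j
    using zinj0[of i j] zinj0[of j i] that by (cases "i \<le> j") auto
  have P1: "\<exists>c i. c ^ Q = c \<and> i < b \<and> y ^ (r * k) = c ^ r * t ^ i" for y :: 'a
  proof (cases "y = 0")
    case True
    have b0: "0 < b" using b2 by simp
    show ?thesis using True r kpos Qpos b0 by (intro exI[of _ 0] exI[of _ 0]) (simp add: power_0_left)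
  next
    case False
    then obtain j where j: "y = g ^ j" using gen by blast
    define u where "u = j div b"
    define i where "i = j mod b"
    have ji: "j = b * u + i" unfolding u_def i_def by simp
    have ib: "i < b" unfolding i_def using b2 by simp
    define c where "c = g ^ (b * k * u)"
    have cK: "c ^ Q = c" unfolding c_def using Kmem by simp
    have "j * (r * k) = b * k * u * r + r * k * i" unfolding ji by (simp add: algebra_simps)
    hence "y ^ (r * k) = c ^ r * t ^ i"
      unfolding j c_def t_def by (simp add: power_mult[symmetric] power_add[symmetric])
    thus ?thesis using cK ib by blast
  qed
  have P2: "\<exists>y::'a. c ^ r * t ^ i = y ^ (r * k)" if cQ: "c ^ Q = c" and ib: "i < b" for c i
  proof (cases "c = 0")
    case True
    thus ?thesis using r kpos by (intro exI[of _ 0]) (simp add: power_0_left)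
  next
    case False
    then obtain u where u: "c = g ^ (b * k * u)" using Knz cQ by blast
    have "(b * u + i) * (r * k) = b * k * u * r + r * k * i" by (simp add: algebra_simps)
    hence "c ^ r * t ^ i = (g ^ (b * u + i)) ^ (r * k)"
      unfolding u t_def by (simp add: power_mult[symmetric] power_add[symmetric])
    thus ?thesis by blast
  qed
  have P3: "\<forall>i<b. c i = d i" if "\<forall>i<b. c i ^ Q = c i" "\<forall>i<b. d i ^ Q = d i"
      "(\<Sum>i<b. c i * t ^ i) = (\<Sum>i<b. d i * t ^ i)" for c d
    by (rule uniq[OF add Qpos t0 tz zK zinj that])
  have b0: "b > 0" using b2 by simp
  note sp = span[OF add Qpos t0 tz zK zinj b0 Kcard[unfolded K_def] Fcard]
  have A: "\<forall>y::'a. \<exists>c i. c ^ Q = c \<and> i < b \<and> y ^ (r * k) = c ^ r * t ^ i" using P1 by blast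
  have B: "\<forall>c i. c ^ Q = c \<longrightarrow> i < b \<longrightarrow> (\<exists>y::'a. c ^ r * t ^ i = y ^ (r * k))" using P2 by blast
  have C: "\<forall>c d. (\<forall>i<b. c i ^ Q = c i) \<longrightarrow> (\<forall>i<b. d i ^ Q = d i) \<longrightarrow>
           (\<Sum>i<b. c i * t ^ i) = (\<Sum>i<b. d i * t ^ i) \<longrightarrow> (\<forall>i<b. c i = d i)"
    using P3 by blast
  show ?thesis unfolding k_def[symmetric] unfolding Q_def[symmetric]
    by (intro exI[of _ t] conjI A B C sp)
qed



lemma sum_split_nat: "(\<Sum>j<m+n. f j) = (\<Sum>j<m. f j) + (\<Sum>j<n. f (m+j))" for m n :: nat
  by (induction n) (simp_all add: add.assoc)

lemma waring_eqI:
  assumes "\<forall>x::'a::{field,finite}. sum_of_kth_powers k s x"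
    and "\<And>s'. \<forall>x::'a. sum_of_kth_powers k s' x \<Longrightarrow> s \<le> s'"
  shows "waring_number TYPE('a) k = Some s"
  unfolding waring_number_def using assms by (auto intro!: Least_equality)

lemma fiber_card_sum:
  assumes "\<forall>j<s. \<iota> j < (b::nat)"
  shows "(\<Sum>i<b. card {j\<in>{..<s}. \<iota> j = i}) \<le> s"
proof -
  have "(\<Sum>i<b. card {j\<in>{..<s}. \<iota> j = i}) = card (\<Union>i<b. {j\<in>{..<s}. \<iota> j = i})"
    by (rule card_UN_disjoint[symmetric]) auto
  also have "\<dots> \<le> card {..<s}" by (intro card_mono) auto
  finally show ?thesis by simp
qed

theorem mainTheorem7:
  fixes p b a :: nat
  assumes "prime p" and "prime b" and "p \<noteq> b" and "a > 0"
    and "b dvd p ^ a - 1"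
    and "card (UNIV :: 'a set) = p ^ (a * b)"
  shows "waring_number TYPE('a::{field,finite}) ((p ^ (a * b) - 1) div (b * (p ^ a - 1))) = Some b
       \<and> (odd p \<and> odd b \<longrightarrow>
          waring_number TYPE('a) ((2 * (p ^ (a * b) - 1)) div (b * (p ^ a - 1))) = Some (2 * b))"
proof -
  note p = assms(1) and bp = assms(2) and a = assms(4) and bdvd = assms(5) and card = assms(6)
  define Q where "Q = p ^ a"
  define k where "k = (p ^ (a * b) - 1) div (b * (p ^ a - 1))"
  define K where "K = {x::'a. x ^ Q = x}"
  have p2: "p \<ge> 2" using p by (simp add: prime_ge_2_nat)
  have b2: "b \<ge> 2" using bp by (simp add: prime_ge_2_nat)
  have Qpos: "Q > 0" using p2 unfolding Q_def by simp
  have chareq: "CHAR('a) = p" by (rule char_eq[OF p card])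
  have add: "(x + y) ^ Q = x ^ Q + y ^ Q" for x y :: 'a
    by (rule freshmans_dream') (use chareq p in \<open>simp_all add: Q_def\<close>)
  have sumK: "(\<Sum>j\<in>A. f j) \<in> K" if "\<forall>j\<in>A. f j \<in> K" for A and f :: "nat \<Rightarrow> 'a"
  proof -
    have "(\<Sum>j\<in>A. f j) ^ Q = (\<Sum>j\<in>A. f j ^ Q)" by (rule sumQ[OF add Qpos])
    also have "\<dots> = (\<Sum>j\<in>A. f j)" using that by (intro sum.cong) (auto simp: K_def)
    finally show ?thesis by (simp add: K_def)
  qed
  have zeroK: "0 \<in> K" using Qpos by (simp add: K_def power_0_left)
  have oneK: "1 \<in> K" by (simp add: K_def)
  have mulK: "x * y \<in> K" if "x \<in> K" "y \<in> K" for x y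
    using that by (simp add: K_def power_mult_distrib)
  have subK: "x - y \<in> K" if "x \<in> K" "y \<in> K" for x y
    using that by (simp add: K_def subQ[OF add])
  have bk: "b * (p ^ a - 1) * k = p ^ (a * b) - 1"
    unfolding k_def by (rule nt_fact[OF p bp a bdvd])
  have partA: "waring_number TYPE('a) k = Some b"
  proof -
    have b1: "\<not> b dvd 1" using b2 by simp
    have "\<exists>t::'a. (\<forall>y::'a. \<exists>c i. c ^ Q = c \<and> i < b \<and> y ^ (1 * k) = c ^ 1 * t ^ i) \<and> (\<forall>c i. c ^ Q = c \<longrightarrow> i < b \<longrightarrow> (\<exists>y::'a. c ^ 1 * t ^ i = y ^ (1 * k))) \<and> (\<forall>c d. (\<forall>i<b. c i ^ Q = c i) \<longrightarrow> (\<forall>i<b. d i ^ Q = d i) \<longrightarrow>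
           (\<Sum>i<b. c i * t ^ i) = (\<Sum>i<b. d i * t ^ i) \<longrightarrow> (\<forall>i<b. c i = d i)) \<and> (\<forall>x. \<exists>c. (\<forall>i<b. c i ^ Q = c i) \<and> x = (\<Sum>i<b. c i * t ^ i)) \<and> (card {x::'a. x ^ Q = x} = Q)"
      unfolding Q_def k_def by (rule fstruct[OF p bp a bdvd card _ b1]) simp
    then obtain t :: 'a where
      T1: "\<forall>y::'a. \<exists>c i. c ^ Q = c \<and> i < b \<and> y ^ (1 * k) = c ^ 1 * t ^ i" and
      T2: "\<forall>c i. c ^ Q = c \<longrightarrow> i < b \<longrightarrow> (\<exists>y::'a. c ^ 1 * t ^ i = y ^ (1 * k))" and
      T3: "\<forall>c d. (\<forall>i<b. c i ^ Q = c i) \<longrightarrow> (\<forall>i<b. d i ^ Q = d i) \<longrightarrow>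
           (\<Sum>i<b. c i * t ^ i) = (\<Sum>i<b. d i * t ^ i) \<longrightarrow> (\<forall>i<b. c i = d i)" and
      T4: "\<forall>x. \<exists>c. (\<forall>i<b. c i ^ Q = c i) \<and> x = (\<Sum>i<b. c i * t ^ i)"
      by blast
    show ?thesis
    proof (rule waring_eqI)
      show "\<forall>x::'a. sum_of_kth_powers k b x"
      proof
        fix x :: 'a
        obtain c where cK: "\<forall>i<b. c i ^ Q = c i" and xc: "x = (\<Sum>i<b. c i * t ^ i)" using T4 by blast
        have "\<forall>i. \<exists>y. i < b \<longrightarrow> c i * t ^ i = y ^ k" using T2 cK by simp
        from choice[OF this] obtain f where f: "\<forall>i. i < b \<longrightarrow> c i * t ^ i = f i ^ k"  by blast
        have "(\<Sum>i<b. f i ^ k) = x" unfolding xc using f by (intro sum.cong) auto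
        thus "sum_of_kth_powers k b x" unfolding sum_of_kth_powers_def by blast
      qed
    next
      fix s assume all: "\<forall>x::'a. sum_of_kth_powers k s x"
      show "b \<le> s"
      proof (rule ccontr)
        assume sb: "\<not> b \<le> s"
        define x0 where "x0 = (\<Sum>i<b. (\<lambda>_. 1::'a) i * t ^ i)"
        obtain f where f: "(\<Sum>j<s. f j ^ k) = x0" using all unfolding sum_of_kth_powers_def by blast
        have "\<forall>j. \<exists>ci. (fst ci) ^ Q = fst ci \<and> snd ci < b \<and> f j ^ k = fst ci * t ^ snd ci"
          using T1 by simp
        from choice[OF this] obtain ci where ci: "\<And>j. (fst (ci j)) ^ Q = fst (ci j) \<and> snd (ci j) < b \<and> f j ^ k = fst (ci j) * t ^ snd (ci j)"
          by blast
        define d where "d j = fst (ci j)" for j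
        define \<iota> where "\<iota> j = snd (ci j)" for j
        have \<iota>b: "\<forall>j<s. \<iota> j < b" using ci unfolding \<iota>_def by blast
        define e where "e i = (\<Sum>j\<in>{j\<in>{..<s}. \<iota> j = i}. d j)" for i
        have "x0 = (\<Sum>j<s. d j * t ^ \<iota> j)" unfolding f[symmetric] d_def \<iota>_def using ci by simp
        also have "\<dots> = (\<Sum>i<b. e i * t ^ i)" unfolding e_def by (rule regroup[OF \<iota>b])
        finally have eq: "(\<Sum>i<b. e i * t ^ i) = (\<Sum>i<b. (\<lambda>_. 1::'a) i * t ^ i)" unfolding x0_def by simp
        have eK: "\<forall>i<b. e i ^ Q = e i"
          using sumK ci unfolding e_def K_def d_def by auto
        have e1: "\<forall>i<b. e i = 1" using T3[rule_format, of e "\<lambda>_. 1"] eK eq by simp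
        have "card (\<iota> ` {..<s}) < card {..<b}" using sb by (metis card_image_le card_lessThan finite_lessThan le_less_trans not_le)
        hence "\<not> {..<b} \<subseteq> \<iota> ` {..<s}" by (metis card_mono finite_imageI finite_lessThan not_le)
        then obtain i where i: "i < b" "i \<notin> \<iota> ` {..<s}" by auto
        hence fe: "{j\<in>{..<s}. \<iota> j = i} = {}" by auto
        have "e i = 0" unfolding e_def fe by simp
        thus False using e1 i by simp
      qed
    qed
  qed
  have partB: "waring_number TYPE('a) ((2 * (p ^ (a * b) - 1)) div (b * (p ^ a - 1))) = Some (2 * b)"
    if oddp: "odd p" and oddb: "odd b"
  proof -
    have b1: "\<not> b dvd 2"
    proof
      assume "b dvd 2" hence "b \<le> 2" by (simp add: dvd_imp_le)
      hence "b = 2" using b2 by simp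
      thus False using oddb by simp
    qed
    have exp: "(2 * (p ^ (a * b) - 1)) div (b * (p ^ a - 1)) = 2 * k"
    proof -
      have "p \<le> p ^ a" using p2 a by (simp add: self_le_power)
      hence "b * (p ^ a - 1) > 0" using b2 p2 by simp
      thus ?thesis using bk[symmetric] by (simp add: mult_ac)
    qed
    have "\<exists>t::'a. (\<forall>y::'a. \<exists>c i. c ^ Q = c \<and> i < b \<and> y ^ (2 * k) = c ^ 2 * t ^ i) \<and> (\<forall>c i. c ^ Q = c \<longrightarrow> i < b \<longrightarrow> (\<exists>y::'a. c ^ 2 * t ^ i = y ^ (2 * k))) \<and> (\<forall>c d. (\<forall>i<b. c i ^ Q = c i) \<longrightarrow> (\<forall>i<b. d i ^ Q = d i) \<longrightarrow>
           (\<Sum>i<b. c i * t ^ i) = (\<Sum>i<b. d i * t ^ i) \<longrightarrow> (\<forall>i<b. c i = d i)) \<and> (\<forall>x. \<exists>c. (\<forall>i<b. c i ^ Q = c i) \<and> x = (\<Sum>i<b. c i * t ^ i)) \<and> (card {x::'a. x ^ Q = x} = Q)"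
      unfolding Q_def k_def by (rule fstruct[OF p bp a bdvd card _ b1]) simp
    then obtain t :: 'a where
      T1: "\<forall>y::'a. \<exists>c i. c ^ Q = c \<and> i < b \<and> y ^ (2 * k) = c ^ 2 * t ^ i" and
      T2: "\<forall>c i. c ^ Q = c \<longrightarrow> i < b \<longrightarrow> (\<exists>y::'a. c ^ 2 * t ^ i = y ^ (2 * k))" and
      T3: "\<forall>c d. (\<forall>i<b. c i ^ Q = c i) \<longrightarrow> (\<forall>i<b. d i ^ Q = d i) \<longrightarrow>
           (\<Sum>i<b. c i * t ^ i) = (\<Sum>i<b. d i * t ^ i) \<longrightarrow> (\<forall>i<b. c i = d i)" and
      T4: "\<forall>x. \<exists>c. (\<forall>i<b. c i ^ Q = c i) \<and> x = (\<Sum>i<b. c i * t ^ i)"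
      by blast
    have finK: "finite K" by simp
    have ne: "(1::'a) \<noteq> -1"
    proof
      assume "(1::'a) = -1"
      hence "(of_nat 2 :: 'a) = 0" by (simp add: eq_neg_iff_add_eq_0)
      hence "CHAR('a) dvd 2" by (simp only: of_nat_eq_0_iff_char_dvd)
      hence "p dvd 2" using chareq by simp
      hence "p \<le> 2" by (simp add: dvd_imp_le)
      hence "p = 2" using p2 by simp
      thus False using oddp by simp
    qed
    have moneK: "-1 \<in> K" using subK[OF zeroK oneK] by simp
    obtain n where nK: "n \<in> K" and nsq: "\<forall>x\<in>K. n \<noteq> x ^ 2"
      using nonsquare[OF finK mulK oneK moneK ne] by blast
    show ?thesis unfolding exp
    proof (rule waring_eqI)
      show "\<forall>x::'a. sum_of_kth_powers (2 * k) (2 * b) x"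
      proof
        fix x :: 'a
        obtain c where cK: "\<forall>i<b. c i ^ Q = c i" and xc: "x = (\<Sum>i<b. c i * t ^ i)" using T4 by blast
        have "\<forall>i. \<exists>uv. i < b \<longrightarrow> fst uv \<in> K \<and> snd uv \<in> K \<and> c i = fst uv ^ 2 + snd uv ^ 2"
        proof
          fix i show "\<exists>uv. i < b \<longrightarrow> fst uv \<in> K \<and> snd uv \<in> K \<and> c i = fst uv ^ 2 + snd uv ^ 2"
          proof (cases "i < b")
            case True
            hence "c i \<in> K" using cK K_def by simp
            then obtain u v where "u \<in> K" "v \<in> K" "c i = u ^ 2 + v ^ 2"
              using squares[OF finK mulK subK zeroK] by blast
            thus ?thesis by (intro exI[of _ "(u, v)"]) simp
          qed simp
        qed
        from choice[OF this] obtain uv where uv: "\<forall>i. i < b \<longrightarrow> fst (uv i) \<in> K \<and> snd (uv i) \<in> K \<and> c i = fst (uv i) ^ 2 + snd (uv i) ^ 2"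
          by blast
        have "\<forall>i. \<exists>UV. i < b \<longrightarrow> fst (uv i) ^ 2 * t ^ i = fst UV ^ (2 * k) \<and> snd (uv i) ^ 2 * t ^ i = snd UV ^ (2 * k)"
        proof
          fix i show "\<exists>UV. i < b \<longrightarrow> fst (uv i) ^ 2 * t ^ i = fst UV ^ (2 * k) \<and> snd (uv i) ^ 2 * t ^ i = snd UV ^ (2 * k)"
          proof (cases "i < b")
            case True
            then obtain U V where "fst (uv i) ^ 2 * t ^ i = U ^ (2 * k)" "snd (uv i) ^ 2 * t ^ i = V ^ (2 * k)"
              using T2 uv unfolding K_def by blast
            thus ?thesis by (intro exI[of _ "(U, V)"]) simp
          qed simp
        qed
        from choice[OF this] obtain UV where UV: "\<forall>i. i < b \<longrightarrow> fst (uv i) ^ 2 * t ^ i = fst (UV i) ^ (2 * k) \<and> snd (uv i) ^ 2 * t ^ i = snd (UV i) ^ (2 * k)"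
          by blast
        define f where "f j = (if j < b then fst (UV j) else snd (UV (j - b)))" for j
        have "(\<Sum>j<2*b. f j ^ (2 * k)) = (\<Sum>j<b. f j ^ (2 * k)) + (\<Sum>j<b. f (b + j) ^ (2 * k))"
          using sum_split_nat[of "\<lambda>j. f j ^ (2 * k)" b b] by (simp add: mult_2)
        also have "(\<Sum>j<b. f j ^ (2 * k)) = (\<Sum>j<b. fst (uv j) ^ 2 * t ^ j)"
        proof (rule sum.cong[OF refl])
          fix j assume "j \<in> {..<b}" thus "f j ^ (2 * k) = fst (uv j) ^ 2 * t ^ j"
            using UV unfolding f_def by simp
        qed
        also have "(\<Sum>j<b. f (b + j) ^ (2 * k)) = (\<Sum>j<b. snd (uv j) ^ 2 * t ^ j)"
        proof (rule sum.cong[OF refl])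
          fix j assume "j \<in> {..<b}" thus "f (b + j) ^ (2 * k) = snd (uv j) ^ 2 * t ^ j"
            using UV unfolding f_def by simp
        qed
        also have "(\<Sum>j<b. fst (uv j) ^ 2 * t ^ j) + (\<Sum>j<b. snd (uv j) ^ 2 * t ^ j)
             = (\<Sum>j<b. fst (uv j) ^ 2 * t ^ j + snd (uv j) ^ 2 * t ^ j)"
          by (rule sum.distrib[symmetric])
        also have "\<dots> = (\<Sum>j<b. c j * t ^ j)"
        proof (rule sum.cong[OF refl])
          fix j assume "j \<in> {..<b}" thus "fst (uv j) ^ 2 * t ^ j + snd (uv j) ^ 2 * t ^ j = c j * t ^ j"
            using uv by (simp add: distrib_right)
        qed
        finally show "sum_of_kth_powers (2 * k) (2 * b) x" unfolding sum_of_kth_powers_def xc by blast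
      qed
    next
      fix s assume all: "\<forall>x::'a. sum_of_kth_powers (2 * k) s x"
      show "2 * b \<le> s"
      proof (rule ccontr)
        assume sb: "\<not> 2 * b \<le> s"
        define x0 where "x0 = (\<Sum>i<b. (\<lambda>_. n) i * t ^ i)"
        obtain f where f: "(\<Sum>j<s. f j ^ (2 * k)) = x0" using all unfolding sum_of_kth_powers_def by blast
        have "\<forall>j. \<exists>ci. (fst ci) ^ Q = fst ci \<and> snd ci < b \<and> f j ^ (2 * k) = fst ci ^ 2 * t ^ snd ci"
          using T1 by simp
        from choice[OF this] obtain ci where ci: "\<And>j. (fst (ci j)) ^ Q = fst (ci j) \<and> snd (ci j) < b \<and> f j ^ (2 * k) = fst (ci j) ^ 2 * t ^ snd (ci j)"
          by blast
        define d where "d j = fst (ci j)" for j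
        define \<iota> where "\<iota> j = snd (ci j)" for j
        have \<iota>b: "\<forall>j<s. \<iota> j < b" using ci unfolding \<iota>_def by blast
        define e where "e i = (\<Sum>j\<in>{j\<in>{..<s}. \<iota> j = i}. d j ^ 2)" for i
        have "x0 = (\<Sum>j<s. d j ^ 2 * t ^ \<iota> j)" unfolding f[symmetric] d_def \<iota>_def using ci by simp
        also have "\<dots> = (\<Sum>i<b. e i * t ^ i)" unfolding e_def by (rule regroup[OF \<iota>b])
        finally have eq: "(\<Sum>i<b. e i * t ^ i) = (\<Sum>i<b. (\<lambda>_. n) i * t ^ i)" unfolding x0_def by simp
        have dK: "d j \<in> K" for j using ci unfolding d_def K_def by simp
        have d2K: "d j ^ 2 \<in> K" for j using mulK[OF dK dK] by (simp add: power2_eq_square)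
        have "e i \<in> K" for i unfolding e_def by (rule sumK) (use d2K in blast)
        hence eK: "\<forall>i<b. e i ^ Q = e i" unfolding K_def by simp
        have nK': "\<forall>i<b. (\<lambda>_. n) i ^ Q = (\<lambda>_. n) i" using nK K_def by simp
        have en: "\<forall>i<b. e i = n" using T3[rule_format, of e "\<lambda>_. n"] eK nK' eq by simp
        have "\<exists>i<b. card {j\<in>{..<s}. \<iota> j = i} \<le> 1"
        proof (rule ccontr)
          assume "\<not> ?thesis"
          hence "\<forall>i<b. 2 \<le> card {j\<in>{..<s}. \<iota> j = i}" by auto
          hence "(\<Sum>i<b. 2) \<le> (\<Sum>i<b. card {j\<in>{..<s}. \<iota> j = i})" by (intro sum_mono) auto
          thus False using fiber_card_sum[OF \<iota>b] sb by simp
        qed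
        then obtain i where i: "i < b" "card {j\<in>{..<s}. \<iota> j = i} \<le> 1" by blast
        show False
        proof (cases "card {j\<in>{..<s}. \<iota> j = i} = 0")
          case True
          hence fe: "{j\<in>{..<s}. \<iota> j = i} = {}" by simp
          have "e i = 0 ^ 2" unfolding e_def fe by simp
          moreover have "e i = n" using en i(1) by simp
          ultimately have "n = 0 ^ 2" by simp
          thus False using nsq zeroK by blast
        next
          case False
          hence "card {j\<in>{..<s}. \<iota> j = i} = 1" using i(2) by linarith
          then obtain j0 where fe: "{j\<in>{..<s}. \<iota> j = i} = {j0}" by (rule card_1_singletonE)
          have "e i = d j0 ^ 2" unfolding e_def fe by simp
          moreover have "e i = n" using en i(1) by simp
          ultimately have "n = d j0 ^ 2" by simp
          thus False using nsq dK by blast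
        qed
      qed
    qed
  qed
  show ?thesis using partA partB unfolding k_def by blast
qed


end
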